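(* If $s$ is a normalized fully ternary string of length $n$ which is good (in the sense defined in the context), then $d_{\rm g}(s)=n-3$.
   Context: Strings are finite words over $\{0,1,2,\dots\}$. A string is \emph{normalized} if no two adjacent symbols are equal; the \emph{normalization} of a string replaces every maximal run of identical symbols by a single copy. A string is \emph{fully $k$-ary} if the set of symbols occurring in it is exactly $\{0,\dots,k-1\}$; fully ternary means fully $3$-ary. For a normalized string $s=s_1\cdots s_n$ and $1\le i\le n$, the flip $f^{(i)}(s)$ is the normalization of $s_i\cdots s_1 s_{i+1}\cdots s_n$. The grouping distance $d_{\rm g}(s)$ of a normalized fully $k$-ary string is the minimum number of flips needed to transform $s$ into a string of length $k$. Regular-expression notation: $w^i$ is $i$ repetitions of $w$, $w^*$ is zero or more, $w^+$ one or more, $w^{\ge 2}$ two or more repetitions; $\{a,b\}$ denotes a single symbol that is either $a$ or $b$ (chosen independently at each occurrence). A normalized fully ternary string is \emph{bad} (for grouping) if, after some relabelling (bijection) of the symbols $\{0,1,2\}$, it is of one of the following types: (I) $0(12)^{\ge 2}$ or $02(12)^+$; (II) $(\{0,1\}2)^+$ or $(2\{0,1\})^+2$; (III) $0(21)^+02(12)^*$; (IV) one of the eight strings $210212$, $021012$, $0120212$, $1201212$, $02101212$, $20210212$, $020210212$, $120120212$. All other normalized fully ternary strings are \emph{good}. *)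

theory Defs
  imports Main
begin

definition normalized :: "nat list \<Rightarrow> bool" where
  "normalized s \<longleftrightarrow> (\<forall>i. Suc i < length s \<longrightarrow> s ! i \<noteq> s ! Suc i)"

definition normalization :: "nat list \<Rightarrow> nat list" where
  "normalization s = remdups_adj s"

definition fully_kary :: "nat \<Rightarrow> nat list \<Rightarrow> bool" where
  "fully_kary k s \<longleftrightarrow> set s = {0..<k}"

text \<open>Flip f^(i)(s), meaningful for 1 <= i <= length s.\<close>
definition flip :: "nat \<Rightarrow> nat list \<Rightarrow> nat list" where
  "flip i s = normalization (rev (take i s) @ drop i s)"

fun reach :: "nat list \<Rightarrow> nat \<Rightarrow> nat list \<Rightarrow> bool" where
  "reach s 0 t = (t = s)"
| "reach s (Suc m) t = (\<exists>i. 1 \<le> i \<and> i \<le> length s \<and> reach (flip i s) m t)"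

definition grouping_distance :: "nat \<Rightarrow> nat list \<Rightarrow> nat" where
  "grouping_distance k s = (LEAST m. \<exists>t. reach s m t \<and> length t = k)"

definition rep :: "nat \<Rightarrow> nat list \<Rightarrow> nat list" where
  "rep j w = concat (replicate j w)"

definition typeI :: "nat list set" where
  "typeI = {[0] @ rep j [1,2] | j. j \<ge> 2} \<union> {[0,2] @ rep j [1,2] | j. j \<ge> 1}"

definition typeII :: "nat list set" where
  "typeII = {concat (map (\<lambda>x. [x,2]) xs) | xs. xs \<noteq> [] \<and> set xs \<subseteq> {0,1}}
          \<union> {concat (map (\<lambda>x. [2,x]) xs) @ [2] | xs. xs \<noteq> [] \<and> set xs \<subseteq> {0,1}}"

definition typeIII :: "nat list set" where
  "typeIII = {[0] @ rep a [2,1] @ [0,2] @ rep b [1,2] | a b. a \<ge> 1}"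

definition typeIV :: "nat list set" where
  "typeIV = {[2,1,0,2,1,2], [0,2,1,0,1,2], [0,1,2,0,2,1,2], [1,2,0,1,2,1,2],
             [0,2,1,0,1,2,1,2], [2,0,2,1,0,2,1,2], [0,2,0,2,1,0,2,1,2],
             [1,2,0,1,2,0,2,1,2]}"

definition bad :: "nat list \<Rightarrow> bool" where
  "bad s \<longleftrightarrow> (\<exists>\<sigma>. bij_betw \<sigma> {0,1,2} {0,1,2} \<and>
      map \<sigma> s \<in> typeI \<union> typeII \<union> typeIII \<union> typeIV)"

definition good :: "nat list \<Rightarrow> bool" where
  "good s \<longleftrightarrow> \<not> bad s"

end

theory Submission
  imports Defs
begin

lemma normalized_iff: "normalized s \<longleftrightarrow> distinct_adj s"
  by (simp add: normalized_def distinct_adj_conv_nth)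

definition mv :: "nat \<Rightarrow> nat list \<Rightarrow> nat list" where
  "mv k s = rev (take k s) @ drop (Suc k) s"

lemma split_at: "0 < k \<Longrightarrow> k < length s \<Longrightarrow> \<exists>xs. s = s!0 # xs @ s!k # drop (Suc k) s \<and> length xs = k - 1 \<and> take k s = s!0 # xs"
proof -
  assume a: "0 < k" "k < length s"
  obtain x xs where s: "s = x # xs" using a by (cases s) auto
  have e: "xs = take (k-1) xs @ xs!(k-1) # drop k xs"
    using id_take_nth_drop[of "k-1" xs] a s by simp
  have "s = s!0 # take (k-1) xs @ s!k # drop (Suc k) s"
    using a s e by (cases k) auto
  then show ?thesis using a s
    by (intro exI[of _ "take (k-1) xs"]) (cases k, auto)
qed

lemma mv_eq: "mv (Suc (length u)) (a # u @ a # w) = rev u @ a # w"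
  by (simp add: mv_def)

lemma flip_mv:
  assumes "distinct_adj s" "0 < k" "k < length s" "s ! k = s ! 0"
  shows "flip k s = mv k s"
proof -
  obtain xs where s: "s = s!0 # xs @ s!k # drop (Suc k) s" and l: "length xs = k - 1"
    and tk: "take k s = s!0 # xs"
    using split_at[OF assms(2,3)] by blast
  define x where "x = s!0"
  define ys where "ys = drop (Suc k) s"
  have s2: "s = x # xs @ x # ys" using s assms(4) by (simp add: x_def ys_def)
  have da: "distinct_adj (x # xs @ x # ys)" using assms(1) s2 by simp
  have "flip k s = remdups_adj (rev (x # xs) @ x # ys)"
  proof -
    have "drop k s = s!k # drop (Suc k) s" using assms(3) by (simp add: Cons_nth_drop_Suc)
    then show ?thesis unfolding flip_def normalization_def using tk assms(4)
      by (simp add: x_def ys_def)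
  qed
  also have "\<dots> = rev (x # xs) @ ys"
  proof -
    have d1: "distinct_adj (x # ys)" using da distinct_adj_appendD2[of "x # xs" "x # ys"] by simp
    have d2: "distinct_adj (rev (x # xs))" unfolding distinct_adj_rev using da distinct_adj_appendD1[of "x # xs" "x # ys"] by simp
    have d3: "distinct_adj (rev (x # xs) @ ys)" using d1 d2
      by (auto simp: distinct_adj_append_iff distinct_adj_Cons)
    have "remdups_adj (rev (x # xs) @ x # ys) = remdups_adj (rev xs @ [x, x] @ ys)" by simp
    also have "\<dots> = remdups_adj ((rev xs @ [x, x]) @ ys)" by simp
    finally have A: "remdups_adj (rev (x # xs) @ x # ys) = remdups_adj ((rev xs @ [x, x]) @ ys)" .
    show ?thesis
    proof (cases ys)
      case Nil
      then show ?thesis using remdups_adj_append_two[of "rev xs" x x] d2 A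
        by (simp add: distinct_adj_altdef)
    next
      case (Cons z zs)
      have "remdups_adj ((rev xs @ [x, x]) @ z # zs) = remdups_adj ((rev xs @ [x, x]) @ [z]) @ tl (remdups_adj (z # zs))"
        using remdups_adj_append[of "rev xs @ [x,x]" z zs] by simp
      also have "remdups_adj ((rev xs @ [x, x]) @ [z]) = remdups_adj (rev xs @ [x, z])"
        using remdups_adj_append_two[of "rev xs @ [x]" x z] remdups_adj_append_two[of "rev xs" x z]
          remdups_adj_append_two[of "rev xs" x x] by simp
      finally show ?thesis using A Cons d3 remdups_adj_append[of "rev xs @ [x]" z zs]
        by (simp add: distinct_adj_altdef)
    qed
  qed
  finally show ?thesis by (simp add: mv_def tk x_def ys_def)
qed

lemma len_rda_snoc: "distinct_adj xs \<Longrightarrow> length xs \<le> length (remdups_adj (xs @ [y]))"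
proof (cases xs rule: rev_cases)
  case Nil then show ?thesis by simp
next
  case (snoc xs' x)
  assume "distinct_adj xs"
  then show ?thesis using snoc remdups_adj_append_two[of xs' x y]
    by (simp add: distinct_adj_altdef)
qed

lemma len_rda_app: "distinct_adj xs \<Longrightarrow> distinct_adj ys \<Longrightarrow> length xs + length ys \<le> Suc (length (remdups_adj (xs @ ys)))"
proof (cases ys)
  case Nil
  assume "distinct_adj xs" then show ?thesis using Nil by (simp add: distinct_adj_altdef)
next
  case (Cons y ys')
  assume a: "distinct_adj xs" "distinct_adj ys"
  have "remdups_adj (xs @ y # ys') = remdups_adj (xs @ [y]) @ tl (remdups_adj (y # ys'))"
    by (rule remdups_adj_append)
  also have "tl (remdups_adj (y # ys')) = ys'" using a Cons by (simp add: distinct_adj_altdef)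
  finally show ?thesis using len_rda_snoc[OF a(1), of y] Cons by simp
qed

lemma flip_len:
  assumes "distinct_adj s"
  shows "length s \<le> Suc (length (flip i s))"
proof -
  have d1: "distinct_adj (rev (take i s))" using assms
    by (metis append_take_drop_id distinct_adj_appendD1 distinct_adj_rev)
  have d2: "distinct_adj (drop i s)" using assms
    by (metis append_take_drop_id distinct_adj_appendD2)
  have "length (rev (take i s)) + length (drop i s) = length s" by simp
  then show ?thesis using len_rda_app[OF d1 d2] by (simp add: flip_def normalization_def)
qed

lemma flip_da: "distinct_adj (flip i s)"
  by (simp add: flip_def normalization_def)

lemma flip_set: "set (flip i s) = set s"
proof -
  have "set (rev (take i s) @ drop i s) = set s"
    by (metis append_take_drop_id set_append set_rev)
  then show ?thesis by (simp add: flip_def normalization_def)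
qed

lemma reach_len: "distinct_adj s \<Longrightarrow> reach s m t \<Longrightarrow> length s \<le> length t + m"
proof (induction m arbitrary: s)
  case 0
  then show ?case by simp
next
  case (Suc m)
  then obtain i where i: "reach (flip i s) m t" by auto
  have "length (flip i s) \<le> length t + m" using Suc.IH[OF flip_da i] .
  moreover have "length s \<le> Suc (length (flip i s))" using flip_len[OF Suc.prems(1)] .
  ultimately show ?case by simp
qed

lemma mv_props:
  assumes "distinct_adj s" "0 < k" "k < length s" "s ! k = s ! 0"
  shows "distinct_adj (mv k s)" "set (mv k s) = set s" "length (mv k s) = length s - 1"
proof -
  show "distinct_adj (mv k s)" using flip_da[of k s] flip_mv[OF assms] by simp
  show "set (mv k s) = set s" using flip_set[of k s] flip_mv[OF assms] by simp
  show "length (mv k s) = length s - 1" using assms by (simp add: mv_def)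
qed

fun alt :: "nat \<Rightarrow> nat \<Rightarrow> nat \<Rightarrow> nat list" where
  "alt x y 0 = []"
| "alt x y (Suc n) = x # alt y x n"

lemma length_alt[simp]: "length (alt x y n) = n"
  by (induction n arbitrary: x y) auto

lemma alt_nth: "i < n \<Longrightarrow> alt x y n ! i = (if even i then x else y)"
  by (induction n arbitrary: x y i) (auto simp: nth_Cons split: nat.splits)

lemma set_alt: "set (alt x y n) \<subseteq> {x, y}"
  by (induction n arbitrary: x y) auto

lemma map_alt: "map f (alt x y n) = alt (f x) (f y) n"
  by (induction n arbitrary: x y) auto

lemma alt_add: "alt x y (m + n) = alt x y m @ (if even m then alt x y n else alt y x n)"
  by (induction m arbitrary: x y) auto

lemma alt_2: "alt x y (2 * k) = rep k [x, y]"
  by (induction k) (auto simp: rep_def)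

lemma alt_snoc: "alt x y (Suc n) = alt x y n @ [if even n then x else y]"
  using alt_add[of x y n 1] by simp

lemma alt_snoc2: "alt y x n @ [if even n then y else x] = y # alt x y n"
  by (simp only: alt_snoc[symmetric] alt.simps)

lemma rev_alt: "rev (alt x y n) = (if even n then alt y x n else alt x y n)"
proof (induction n arbitrary: x y)
  case 0 then show ?case by simp
next
  case (Suc n)
  show ?case using Suc alt_snoc2[of y x n] alt_snoc2[of x y n] by auto
qed

lemma da_alt: "x \<noteq> y \<Longrightarrow> distinct_adj (alt x y n)"
proof (induction n arbitrary: x y)
  case 0 then show ?case by simp
next
  case (Suc n) then show ?case by (cases n) auto
qed

lemma alt_unique: "distinct_adj v \<Longrightarrow> set v \<subseteq> {x, y} \<Longrightarrow> v \<noteq> [] \<Longrightarrow> hd v = x \<Longrightarrow> v = alt x y (length v)"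
proof (induction v arbitrary: x y)
  case Nil then show ?case by simp
next
  case (Cons a v)
  show ?case
  proof (cases v)
    case Nil then show ?thesis using Cons by simp
  next
    case (Cons b w)
    have "b = y" using Cons.prems Cons by auto
    moreover have "v = alt y x (length v)"
      using Cons.IH[of y x] Cons.prems Cons \<open>b = y\<close> by (auto simp: distinct_adj_Cons)
    ultimately show ?thesis using Cons.prems by simp
  qed
qed

lemma map_rep: "map f (rep k w) = rep k (map f w)"
  by (induction k) (auto simp: rep_def)

definition I_c :: "nat list \<Rightarrow> bool" where
  "I_c s = (4 \<le> length s \<and> hd s \<notin> set (tl s))"
definition II_c :: "nat list \<Rightarrow> bool" where
  "II_c s = (\<forall>i<length s. even (length s - 1 - i) \<longrightarrow> s!i = last s)"
definition III_c :: "nat list \<Rightarrow> bool" where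
  "III_c s = (\<exists>a b. 1 \<le> a \<and> s = hd s # rep a [s!1, s!2] @ hd s # s!1 # rep b [s!2, s!1])"
definition perms3 :: "nat list list" where
  "perms3 = [[0,1,2],[0,2,1],[1,0,2],[1,2,0],[2,0,1],[2,1,0]]"
definition IV8 :: "nat list list" where
  "IV8 = [[2,1,0,2,1,2], [0,2,1,0,1,2], [0,1,2,0,2,1,2], [1,2,0,1,2,1,2],
             [0,2,1,0,1,2,1,2], [2,0,2,1,0,2,1,2], [0,2,0,2,1,0,2,1,2],
             [1,2,0,1,2,0,2,1,2]]"
definition IVl :: "nat list list" where
  "IVl = concat (map (\<lambda>p. map (map (\<lambda>x. p!x)) IV8) perms3)"
definition IV_c :: "nat list \<Rightarrow> bool" where
  "IV_c s = (length s \<le> 9 \<and> s \<in> set IVl)"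
definition bad_c :: "nat list \<Rightarrow> bool" where
  "bad_c s = (I_c s \<or> II_c s \<or> III_c s \<or> IV_c s)"

definition mk :: "nat \<Rightarrow> nat \<Rightarrow> nat \<Rightarrow> nat \<Rightarrow> nat \<Rightarrow> nat \<Rightarrow> nat \<Rightarrow> nat" where
  "mk A B C p q r = (\<lambda>z. if z = A then p else if z = B then q else r)"

lemma three: "A \<noteq> B \<Longrightarrow> A \<noteq> C \<Longrightarrow> B \<noteq> C \<Longrightarrow> A \<le> 2 \<Longrightarrow> B \<le> 2 \<Longrightarrow> C \<le> (2::nat) \<Longrightarrow> {A, B, C} = {0, 1, 2}"
  by auto

lemma bij_mk:
  assumes "A \<noteq> B" "A \<noteq> C" "B \<noteq> C" "A \<le> 2" "B \<le> 2" "C \<le> 2"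
    "p \<noteq> q" "p \<noteq> r" "q \<noteq> r" "p \<le> 2" "q \<le> 2" "r \<le> 2"
  shows "bij_betw (mk A B C p q r) {0,1,2} {0,1,2}"
proof -
  have e1: "{0,1,2} = {A,B,C}" using three[OF assms(1-6)] by simp
  have e2: "{0,1,2} = {p,q,r}" using three[OF assms(7-12)] by simp
  show ?thesis unfolding e1 unfolding e2 bij_betw_def inj_on_def mk_def using assms by auto
qed

lemma mk_A[simp]: "mk A B C p q r A = p" by (simp add: mk_def)
lemma mk_B[simp]: "A \<noteq> B \<Longrightarrow> mk A B C p q r B = q" by (simp add: mk_def)
lemma mk_C[simp]: "A \<noteq> C \<Longrightarrow> B \<noteq> C \<Longrightarrow> mk A B C p q r C = r" by (simp add: mk_def)

lemma elem3: "set s = {0,1,2} \<Longrightarrow> z \<in> set s \<Longrightarrow> z \<le> (2::nat)"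
  by auto

lemma typeI_1: "2 \<le> j \<Longrightarrow> [0] @ rep j [1,2] \<in> typeI"
  unfolding typeI_def by auto
lemma typeI_2: "1 \<le> j \<Longrightarrow> [0,2] @ rep j [1,2] \<in> typeI"
  unfolding typeI_def by auto
lemma bad_intro: "bij_betw \<sigma> {0,1,2} {0,1,2} \<Longrightarrow> map \<sigma> s \<in> typeI \<union> typeII \<union> typeIII \<union> typeIV \<Longrightarrow> bad s"
  unfolding bad_def by blast

lemma I_sound:
  assumes da: "distinct_adj s" and st: "set s = {0,1,2}" and I: "I_c s"
  shows "bad s"
proof -
  obtain A v where s: "s = A # v" using I by (cases s) (auto simp: I_c_def)
  have Av: "A \<notin> set v" and lv: "3 \<le> length v" using I s by (auto simp: I_c_def)
  define B where "B = hd v"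
  have vne: "v \<noteq> []" using lv by auto
  have Bv: "B \<in> set v" using vne by (simp add: B_def)
  have all2: "\<forall>z\<in>set s. z \<le> 2" using st by simp
  have A2: "A \<le> 2" and B2: "B \<le> 2" using all2 s Bv by auto
  have AB: "A \<noteq> B" using Av Bv by auto
  define C where "C = 3 - A - B"
  have C1: "C \<noteq> A" using A2 B2 AB unfolding C_def by arith
  have C2: "C \<noteq> B" using A2 B2 AB unfolding C_def by arith
  have C3: "C \<le> 2" using A2 B2 AB unfolding C_def by arith
  note C = C1 C2 C3
  have sv: "set v \<subseteq> {B, C}"
  proof
    fix z assume z: "z \<in> set v"
    then have "z \<le> 2" "z \<noteq> A" using all2 s Av by auto
    then have "z = B \<or> z = C" using A2 B2 AB unfolding C_def by presburger
    then show "z \<in> {B, C}" by blast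
  qed
  have dav: "distinct_adj v" using distinct_adj_ConsD[of A v] da s by simp
  define n where "n = length v"
  have v: "v = alt B C n" unfolding n_def by (rule alt_unique[OF dav sv vne]) (simp add: B_def)
  show ?thesis
  proof (cases "even (length v)")
    case True
    then obtain k where k: "n = 2 * k" using n_def by auto
    have k2: "k \<ge> 2" using k lv n_def by arith
    define \<sigma> where "\<sigma> = mk A B C 0 1 2"
    have bij: "bij_betw \<sigma> {0,1,2} {0,1,2}" unfolding \<sigma>_def
      by (rule bij_mk) (use AB C A2 B2 in simp_all)
    have "map \<sigma> v = alt 1 2 (2 * k)"
      using v k AB C by (simp add: \<sigma>_def map_alt)
    then have "map \<sigma> s = [0] @ rep k [1,2]"
      using s by (simp add: \<sigma>_def alt_2)
    then have "map \<sigma> s \<in> typeI" using typeI_1[OF k2] by simp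
    then show ?thesis using bad_intro[OF bij] by blast
  next
    case False
    have "odd n" using False n_def by simp
    then obtain k0 where k0: "n = 2 * k0 + 1" by (rule oddE)
    obtain k where k: "n = Suc (2 * k)" using k0 by simp
    have k1: "k \<ge> 1" using k lv n_def by arith
    define \<sigma> where "\<sigma> = mk A B C 0 2 1"
    have bij: "bij_betw \<sigma> {0,1,2} {0,1,2}" unfolding \<sigma>_def
      by (rule bij_mk) (use AB C A2 B2 in simp_all)
    have "map \<sigma> v = alt 2 1 (Suc (2 * k))"
      using v k AB C by (simp add: \<sigma>_def map_alt del: alt.simps)
    then have "map \<sigma> s = [0,2] @ rep k [1,2]"
      using s by (simp add: \<sigma>_def alt_2)
    then have "map \<sigma> s \<in> typeI" using typeI_2[OF k1] by simp
    then show ?thesis using bad_intro[OF bij] by blast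
  qed
qed

lemma Q_tail: "\<forall>i<length (x # y # zs). ((x # y # zs) ! i = (2::nat)) = even (length (x # y # zs) - 1 - i)
  \<Longrightarrow> \<forall>i<length zs. (zs ! i = 2) = even (length zs - 1 - i)"
proof (intro allI impI)
  fix i assume a: "\<forall>i<length (x # y # zs). ((x # y # zs) ! i = (2::nat)) = even (length (x # y # zs) - 1 - i)"
    and i: "i < length zs"
  have "((x # y # zs) ! (Suc (Suc i)) = 2) = even (length (x # y # zs) - 1 - Suc (Suc i))"
    using a[rule_format, of "Suc (Suc i)"] i by simp
  moreover have "length (x # y # zs) - 1 - Suc (Suc i) = length zs - 1 - i" by simp
  ultimately show "(zs ! i = 2) = even (length zs - 1 - i)" by simp
qed

lemma Q_even: "\<forall>i<length r. (r ! i = (2::nat)) = even (length r - 1 - i) \<Longrightarrow> set r \<subseteq> {0,1,2} \<Longrightarrow> even (length r)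
  \<Longrightarrow> \<exists>xs. r = concat (map (\<lambda>x. [x,2]) xs) \<and> set xs \<subseteq> {0,1} \<and> length r = 2 * length xs"
proof (induction r rule: induct_list012)
  case 1 then show ?case by simp
next
  case (2 x) then show ?case by simp
next
  case (3 x y zs)
  have q: "\<forall>i<length zs. (zs ! i = 2) = even (length zs - 1 - i)" using Q_tail[OF "3.prems"(1)] .
  obtain xs where xs: "zs = concat (map (\<lambda>x. [x,2]) xs)" "set xs \<subseteq> {0,1}" "length zs = 2 * length xs"
    using "3.IH"(1)[OF q] "3.prems"(2,3) by auto
  have x: "(x = 2) = even (length (x # y # zs) - 1)" using "3.prems"(1)[rule_format, of 0] by simp
  have y: "(y = 2) = even (length (x # y # zs) - 2)" using "3.prems"(1)[rule_format, of 1] by simp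
  have "x \<noteq> 2" using x "3.prems"(3) by simp
  moreover have "y = 2" using y "3.prems"(3) by simp
  moreover have "x \<le> 2" using "3.prems"(2) by auto
  ultimately show ?case using xs
    by (intro exI[of _ "x # xs"]) auto
qed

lemma concat_shift: "2 # concat (map (\<lambda>x. [x,2]) xs) = concat (map (\<lambda>x. [2,x]) xs) @ [2::nat]"
  by (induction xs) auto

lemma typeII_1: "xs \<noteq> [] \<Longrightarrow> set xs \<subseteq> {0,1} \<Longrightarrow> concat (map (\<lambda>x. [x,2]) xs) \<in> typeII"
  unfolding typeII_def by blast
lemma typeII_2: "xs \<noteq> [] \<Longrightarrow> set xs \<subseteq> {0,1} \<Longrightarrow> concat (map (\<lambda>x. [2,x]) xs) @ [2] \<in> typeII"
  unfolding typeII_def by blast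

lemma len3: "set s = {0,1,2::nat} \<Longrightarrow> 3 \<le> length s"
proof -
  assume "set s = {0,1,2::nat}"
  then have "card (set s) = 3" by simp
  then show ?thesis using card_length[of s] by simp
qed

lemma II_sound:
  assumes da: "distinct_adj s" and st: "set s = {0,1,2}" and II: "II_c s"
  shows "bad s"
proof -
  have l3: "3 \<le> length s" using len3[OF st] .
  define c where "c = last s"
  have Q: "\<forall>i<length s. (s ! i = c) = even (length s - 1 - i)"
  proof (intro allI impI)
    fix i assume i: "i < length s"
    show "(s ! i = c) = even (length s - 1 - i)"
    proof
      assume e: "s ! i = c"
      show "even (length s - 1 - i)"
      proof (rule ccontr)
        assume o: "odd (length s - 1 - i)"
        then have i1: "Suc i < length s" using i by (cases "length s - 1 - i") auto
        have "even (length s - 1 - Suc i)" using o i1 by (cases "length s - 1 - i") auto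
        then have "s ! Suc i = c" using II i1 unfolding II_c_def c_def by blast
        moreover have "s ! i \<noteq> s ! Suc i" using distinct_adj_nth[OF da i1] .
        ultimately show False using e by simp
      qed
    next
      assume "even (length s - 1 - i)"
      then show "s ! i = c" using II i unfolding II_c_def c_def by blast
    qed
  qed
  have "last s \<in> set s" using l3 by (intro last_in_set) auto
  then have c2: "c \<le> 2" using st unfolding c_def by auto
  define x where "x = (if c = 0 then 1 else (0::nat))"
  define y where "y = 3 - c - x"
  have xy: "c \<noteq> x" "c \<noteq> y" "x \<noteq> y" "x \<le> 2" "y \<le> 2"
    using c2 unfolding x_def y_def by (cases "c = 0"; simp; arith)+
  define \<sigma> where "\<sigma> = mk c x y 2 0 1"
  have bij: "bij_betw \<sigma> {0,1,2} {0,1,2}" unfolding \<sigma>_def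
    by (rule bij_mk) (use xy c2 in simp_all)
  have s2: "\<And>z. (\<sigma> z = 2) = (z = c)" unfolding \<sigma>_def mk_def by auto
  define r where "r = map \<sigma> s"
  have Qr: "\<forall>i<length r. (r ! i = 2) = even (length r - 1 - i)"
    using Q s2 unfolding r_def by simp
  have sr: "set r \<subseteq> {0,1,2}" unfolding r_def \<sigma>_def mk_def by auto
  have lr: "length r = length s" unfolding r_def by simp
  show ?thesis
  proof (cases "even (length r)")
    case True
    obtain xs where xs: "r = concat (map (\<lambda>x. [x,2]) xs)" "set xs \<subseteq> {0,1}" "length r = 2 * length xs"
      using Q_even[OF Qr sr True] by blast
    have "xs \<noteq> []" using xs(3) lr l3 by auto
    then have "r \<in> typeII" using typeII_1 xs by simp
    then show ?thesis using bad_intro[OF bij] r_def by blast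
  next
    case False
    obtain z r' where r: "r = z # r'" using lr l3 by (cases r) auto
    have z: "z = 2" using Qr[rule_format, of 0] r False by simp
    have Qr': "\<forall>i<length r'. (r' ! i = 2) = even (length r' - 1 - i)"
    proof (intro allI impI)
      fix i assume i: "i < length r'"
      have "(r ! Suc i = 2) = even (length r - 1 - Suc i)" using Qr[rule_format, of "Suc i"] i r by simp
      then show "(r' ! i = 2) = even (length r' - 1 - i)" using r by simp
    qed
    obtain xs where xs: "r' = concat (map (\<lambda>x. [x,2]) xs)" "set xs \<subseteq> {0,1}" "length r' = 2 * length xs"
      using Q_even[OF Qr'] sr r False by auto
    have "xs \<noteq> []" using xs(3) lr l3 r by auto
    then have "concat (map (\<lambda>x. [2,x]) xs) @ [2] \<in> typeII" using typeII_2 xs by simp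
    then have "r \<in> typeII" using r z xs(1) concat_shift[of xs] by simp
    then show ?thesis using bad_intro[OF bij] r_def by blast
  qed
qed

lemma set_rep: "set (rep k w) \<subseteq> set w"
  by (induction k) (auto simp: rep_def)

lemma rep_Suc: "rep (Suc k) w = w @ rep k w"
  by (simp add: rep_def)

lemma typeIII_1: "1 \<le> a \<Longrightarrow> 0 # rep a [2,1] @ 0 # 2 # rep b [1,2] \<in> typeIII"
  unfolding typeIII_def by auto

lemma III_sound:
  assumes da: "distinct_adj s" and st: "set s = {0,1,2}" and III: "III_c s"
  shows "bad s"
proof -
  obtain a b where a: "1 \<le> a" and e0: "s = hd s # rep a [s!1, s!2] @ hd s # s!1 # rep b [s!2, s!1]"
    using III unfolding III_c_def by blast
  define A where "A = hd s"
  define B where "B = s ! 2"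
  define C where "C = s ! 1"
  have e: "s = A # rep a [C,B] @ A # C # rep b [B,C]"
    unfolding A_def B_def C_def by (rule e0)
  obtain a' where a': "a = Suc a'" using a by (cases a) auto
  have e2: "s = A # C # B # (rep a' [C,B] @ A # C # rep b [B,C])"
    using e a' by (simp add: rep_Suc)
  have "distinct_adj (A # C # B # (rep a' [C,B] @ A # C # rep b [B,C]))" using da e2 by simp
  then have AC: "A \<noteq> C" and CB: "C \<noteq> B" by auto
  have ss: "set s \<subseteq> {A, B, C}"
    using e set_rep[of a "[C,B]"] set_rep[of b "[B,C]"] by auto
  have inS: "A \<in> set s" "B \<in> set s" "C \<in> set s" using e2 by auto
  have le: "A \<le> 2" "B \<le> 2" "C \<le> 2" using inS st by auto
  have AB: "A \<noteq> B"
  proof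
    assume "A = B"
    then have "{0,1,2} \<subseteq> {A, C}" using ss st by auto
    then show False by auto
  qed
  define \<sigma> where "\<sigma> = mk A B C 0 1 2"
  have bij: "bij_betw \<sigma> {0,1,2} {0,1,2}" unfolding \<sigma>_def
    by (rule bij_mk) (use AB AC CB le in simp_all)
  have "map \<sigma> s = 0 # rep a [2,1] @ 0 # 2 # rep b [1,2]"
    using AB AC CB by (subst e) (simp add: map_rep \<sigma>_def)
  then have "map \<sigma> s \<in> typeIII" using typeIII_1[OF a] by simp
  then show ?thesis using bad_intro[OF bij] by blast
qed

lemma IVl_mem: "s \<in> set IVl \<Longrightarrow> \<exists>p\<in>set perms3. \<exists>t\<in>set IV8. s = map (\<lambda>x. p!x) t"
  unfolding IVl_def by auto

lemma IV_sound:
  assumes IV: "IV_c s"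
  shows "bad s"
proof -
  obtain p t where p: "p \<in> set perms3" and t: "t \<in> set IV8" and s: "s = map (\<lambda>x. p!x) t"
    using IV IVl_mem unfolding IV_c_def by blast
  have pr: "p!0 \<noteq> p!1 \<and> p!0 \<noteq> p!2 \<and> p!1 \<noteq> p!2 \<and> p!0 \<le> 2 \<and> p!1 \<le> 2 \<and> p!2 \<le> 2 \<and>
     (\<forall>x\<in>{0,1,2}. mk (p!0) (p!1) (p!2) 0 1 2 (p!x) = x)"
    using p unfolding perms3_def mk_def by auto
  define \<sigma> where "\<sigma> = mk (p!0) (p!1) (p!2) 0 1 2"
  have bij: "bij_betw \<sigma> {0,1,2} {0,1,2}" unfolding \<sigma>_def
    by (rule bij_mk) (use pr in simp_all)
  have ts: "set t \<subseteq> {0,1,2}" using t unfolding IV8_def by auto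
  have "\<forall>x\<in>set t. \<sigma> (p!x) = x" using ts pr unfolding \<sigma>_def by blast
  then have "map \<sigma> s = t" unfolding s by (induction t) auto
  moreover have "t \<in> typeIV" using t unfolding IV8_def typeIV_def by auto
  ultimately show ?thesis using bad_intro[OF bij] by simp
qed

lemma bad_c_sound: "distinct_adj s \<Longrightarrow> set s = {0,1,2} \<Longrightarrow> bad_c s \<Longrightarrow> bad s"
  unfolding bad_c_def using I_sound II_sound III_sound IV_sound by blast

lemma perm_list: "a \<noteq> b \<Longrightarrow> a \<noteq> c \<Longrightarrow> b \<noteq> c \<Longrightarrow> a \<le> 2 \<Longrightarrow> b \<le> 2 \<Longrightarrow> c \<le> (2::nat) \<Longrightarrow> [a,b,c] \<in> set perms3"
proof -
  assume as: "a \<noteq> b" "a \<noteq> c" "b \<noteq> c" "a \<le> 2" "b \<le> 2" "c \<le> 2"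
  have "a = 0 \<or> a = 1 \<or> a = 2" "b = 0 \<or> b = 1 \<or> b = 2" "c = 0 \<or> c = 1 \<or> c = 2" using as by arith+
  then show ?thesis using as unfolding perms3_def by auto
qed

lemma bij_img: "bij_betw \<sigma> {0,1,2} {0,1,2} \<Longrightarrow> z \<in> {0,1,2} \<Longrightarrow> \<sigma> z \<in> {0,1,2::nat}"
proof -
  assume bij: "bij_betw \<sigma> {0,1,2} {0,1,2}" and z: "z \<in> {0,1,2}"
  have img0: "\<sigma> ` {0,1,2} = {0,1,2}" using bij by (simp add: bij_betw_def)
  have "\<sigma> z \<in> \<sigma> ` {0,1,2}" using z by (rule imageI)
  then show "\<sigma> z \<in> {0,1,2}" unfolding img0 .
qed

lemma bij_inj: "bij_betw \<sigma> {0,1,2} {0,1,2} \<Longrightarrow> set s \<subseteq> {0,1,2} \<Longrightarrow> x \<in> set s \<Longrightarrow> y \<in> set s \<Longrightarrow> \<sigma> x = \<sigma> y \<Longrightarrow> x = y"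
proof -
  assume bij: "bij_betw \<sigma> {0,1,2} {0,1,2}" and ss: "set s \<subseteq> {0,1,2}" and xy: "x \<in> set s" "y \<in> set s" "\<sigma> x = \<sigma> y"
  have inj: "inj_on \<sigma> {0,1,2}" using bij by (simp add: bij_betw_def)
  have "x \<in> {0,1,2}" "y \<in> {0,1,2}" using ss xy by (meson subsetD)+
  then show "x = y" using inj_onD[OF inj xy(3)] by blast
qed

lemma sym_I:
  assumes bij: "bij_betw \<sigma> {0,1,2} {0,1,2}" and ss: "set s \<subseteq> {0,1,2}" and b: "I_c s"
  shows "I_c (map \<sigma> s)"
proof -
  obtain h t where s: "s = h # t" using b by (cases s) (auto simp: I_c_def)
  have ht: "h \<notin> set t" using b s by (simp add: I_c_def)
  have "\<sigma> h \<notin> \<sigma> ` set t"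
  proof
    assume "\<sigma> h \<in> \<sigma> ` set t"
    then obtain z where z: "z \<in> set t" "\<sigma> h = \<sigma> z" by auto
    have "h = z" using bij_inj[OF bij ss, of h z] z s by simp
    then show False using ht z by simp
  qed
  then show ?thesis using b s by (simp add: I_c_def)
qed

lemma sym_II: "II_c s \<Longrightarrow> II_c (map \<sigma> s)"
proof (cases "s = []")
  case True then show ?thesis by (simp add: II_c_def)
next
  case False
  assume "II_c s"
  then show ?thesis using False by (simp add: II_c_def last_map)
qed

lemma sym_III:
  assumes b: "III_c s"
  shows "III_c (map \<sigma> s)"
proof -
  obtain a b where a: "1 \<le> a" and e0: "s = hd s # rep a [s!1, s!2] @ hd s # s!1 # rep b [s!2, s!1]"
    using b unfolding III_c_def by blast
  define A where "A = hd s"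
  define B where "B = s ! 2"
  define C where "C = s ! 1"
  have e: "s = A # rep a [C,B] @ A # C # rep b [B,C]"
    unfolding A_def B_def C_def by (rule e0)
  obtain a' where a': "a = Suc a'" using a by (cases a) auto
  define s' where "s' = map \<sigma> s"
  have es: "s' = \<sigma> A # rep a [\<sigma> C, \<sigma> B] @ \<sigma> A # \<sigma> C # rep b [\<sigma> B, \<sigma> C]"
    unfolding s'_def by (subst e) (simp add: map_rep)
  have es2: "s' = \<sigma> A # \<sigma> C # \<sigma> B # (rep a' [\<sigma> C, \<sigma> B] @ \<sigma> A # \<sigma> C # rep b [\<sigma> B, \<sigma> C])"
    using es a' by (simp add: rep_Suc)
  have h: "hd s' = \<sigma> A" "s' ! 1 = \<sigma> C" "s' ! 2 = \<sigma> B" using es2 by simp_all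
  have "s' = hd s' # rep a [s'!1, s'!2] @ hd s' # s'!1 # rep b [s'!2, s'!1]"
    unfolding h by (rule es)
  then show ?thesis unfolding III_c_def s'_def[symmetric] using a by blast
qed

lemma sym_IV:
  assumes bij: "bij_betw \<sigma> {0,1,2} {0,1,2}" and b: "IV_c s"
  shows "IV_c (map \<sigma> s)"
proof -
  obtain p t where p: "p \<in> set perms3" and t: "t \<in> set IV8" and s: "s = map (\<lambda>x. p!x) t"
    using b IVl_mem unfolding IV_c_def by blast
  have pr: "p!0 \<noteq> p!1 \<and> p!0 \<noteq> p!2 \<and> p!1 \<noteq> p!2 \<and> p!0 \<le> 2 \<and> p!1 \<le> 2 \<and> p!2 \<le> 2"
    using p unfolding perms3_def by auto
  have inj: "inj_on \<sigma> {0,1,2}" using bij by (simp add: bij_betw_def)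
  define q where "q = [\<sigma> (p!0), \<sigma> (p!1), \<sigma> (p!2)]"
  have pin: "p!0 \<in> {0,1,2}" "p!1 \<in> {0,1,2}" "p!2 \<in> {0,1,2}" using pr by auto
  have qd1: "\<sigma> (p!0) \<noteq> \<sigma> (p!1)" using pr inj_onD[OF inj _ pin(1) pin(2)] by blast
  have qd2: "\<sigma> (p!0) \<noteq> \<sigma> (p!2)" using pr inj_onD[OF inj _ pin(1) pin(3)] by blast
  have qd3: "\<sigma> (p!1) \<noteq> \<sigma> (p!2)" using pr inj_onD[OF inj _ pin(2) pin(3)] by blast
  have ql1: "\<sigma> (p!0) \<le> 2" using bij_img[OF bij pin(1)] by auto
  have ql2: "\<sigma> (p!1) \<le> 2" using bij_img[OF bij pin(2)] by auto
  have ql3: "\<sigma> (p!2) \<le> 2" using bij_img[OF bij pin(3)] by auto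
  have q: "q \<in> set perms3" unfolding q_def by (rule perm_list[OF qd1 qd2 qd3 ql1 ql2 ql3])
  have ts: "set t \<subseteq> {0,1,2}" using t unfolding IV8_def by auto
  have "\<forall>x\<in>set t. \<sigma> (p!x) = q!x"
  proof
    fix x assume "x \<in> set t"
    then have "x = 0 \<or> x = 1 \<or> x = 2" using ts by auto
    then show "\<sigma> (p!x) = q!x" unfolding q_def by auto
  qed
  then have m: "map \<sigma> s = map (\<lambda>x. q!x) t" unfolding s by (induction t) auto
  have A: "map (\<lambda>x. q!x) t \<in> set (map (map (\<lambda>x. q!x)) IV8)" using t by simp
  have B: "map (map (\<lambda>x. q!x)) IV8 \<in> set (map (\<lambda>p. map (map (\<lambda>x. p!x)) IV8) perms3)"
    unfolding set_map using q by (rule imageI)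
  have "map (\<lambda>x. q!x) t \<in> set IVl" unfolding IVl_def set_concat using A B by blast
  then have "IV_c (map (\<lambda>x. q!x) t)" using b s by (simp add: IV_c_def)
  then show ?thesis unfolding m .
qed

lemma sym_bad:
  assumes bij: "bij_betw \<sigma> {0,1,2} {0,1,2}" and ss: "set s \<subseteq> {0,1,2}" and b: "bad_c s"
  shows "bad_c (map \<sigma> s)"
proof -
  have "I_c s \<or> II_c s \<or> III_c s \<or> IV_c s" using b unfolding bad_c_def .
  then have "I_c (map \<sigma> s) \<or> II_c (map \<sigma> s) \<or> III_c (map \<sigma> s) \<or> IV_c (map \<sigma> s)"
    using sym_I[OF bij ss] sym_II[of s \<sigma>] sym_III[of s \<sigma>] sym_IV[OF bij, of s] by blast
  then show ?thesis unfolding bad_c_def .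
qed

lemma sym_bad_iff:
  assumes bij: "bij_betw \<sigma> {0,1,2} {0,1,2}" and ss: "set s \<subseteq> {0,1,2}"
  shows "bad_c (map \<sigma> s) = bad_c s"
proof
  assume b: "bad_c (map \<sigma> s)"
  define \<tau> where "\<tau> = inv_into {0,1,2} \<sigma>"
  have bt: "bij_betw \<tau> {0,1,2} {0,1,2}" unfolding \<tau>_def by (rule bij_betw_inv_into[OF bij])
  have ss2: "set (map \<sigma> s) \<subseteq> {0,1,2}"
  proof
    fix z assume "z \<in> set (map \<sigma> s)"
    then obtain x where "x \<in> set s" "z = \<sigma> x" by auto
    then show "z \<in> {0,1,2}" using bij_img[OF bij, of x] ss by auto
  qed
  have inj: "inj_on \<sigma> {0,1,2}" using bij by (simp add: bij_betw_def)
  have "\<forall>x\<in>set s. \<tau> (\<sigma> x) = x"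
  proof
    fix x assume "x \<in> set s"
    then have "x \<in> {0,1,2}" using ss by blast
    then show "\<tau> (\<sigma> x) = x" unfolding \<tau>_def by (rule inv_into_f_f[OF inj])
  qed
  then have eq: "map \<tau> (map \<sigma> s) = s" by (induction s) auto
  have "bad_c (map \<tau> (map \<sigma> s))" by (rule sym_bad[OF bt ss2 b])
  then show "bad_c s" unfolding eq .
qed (rule sym_bad[OF bij ss])

lemma IVl_lit: "IVl = [[2,1,0,2,1,2], [0,2,1,0,1,2], [0,1,2,0,2,1,2], [1,2,0,1,2,1,2], [0,2,1,0,1,2,1,2], [2,0,2,1,0,2,1,2], [0,2,0,2,1,0,2,1,2], [1,2,0,1,2,0,2,1,2], [1,2,0,1,2,1], [0,1,2,0,2,1], [0,2,1,0,1,2,1], [2,1,0,2,1,2,1], [0,1,2,0,2,1,2,1], [1,0,1,2,0,1,2,1], [0,1,0,1,2,0,1,2,1], [2,1,0,2,1,0,1,2,1], [2,0,1,2,0,2], [1,2,0,1,0,2], [1,0,2,1,2,0,2], [0,2,1,0,2,0,2], [1,2,0,1,0,2,0,2], [2,1,2,0,1,2,0,2], [1,2,1,2,0,1,2,0,2], [0,2,1,0,2,1,2,0,2], [0,2,1,0,2,0], [1,0,2,1,2,0], [1,2,0,1,0,2,0], [2,0,1,2,0,2,0], [1,0,2,1,2,0,2,0], [0,1,0,2,1,0,2,0], [1,0,1,0,2,1,0,2,0], [2,0,1,2,0,1,0,2,0], [1,0,2,1,0,1], [2,1,0,2,0,1], [2,0,1,2,1,0,1], [0,1,2,0,1,0,1],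 [2,1,0,2,0,1,0,1], [1,2,1,0,2,1,0,1], [2,1,2,1,0,2,1,0,1], [0,1,2,0,1,2,1,0,1], [0,1,2,0,1,0], [2,0,1,2,1,0], [2,1,0,2,0,1,0], [1,0,2,1,0,1,0], [2,0,1,2,1,0,1,0], [0,2,0,1,2,0,1,0], [2,0,2,0,1,2,0,1,0], [1,0,2,1,0,2,0,1,0]]"
  by (simp add: IVl_def perms3_def IV8_def)

declare IVl_lit[code]

fun genr :: "nat \<Rightarrow> nat \<Rightarrow> nat list list" where
  "genr x 0 = [[]]"
| "genr x (Suc n) = concat (map (\<lambda>y. map (\<lambda>l. y # l) (genr y n)) (filter (\<lambda>y. y \<noteq> x) [0,1,2]))"

definition II_b :: "nat list \<Rightarrow> bool" where
  "II_b s = list_all (\<lambda>i. odd (length s - 1 - i) \<or> s!i = last s) [0..<length s]"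
definition III_b :: "nat list \<Rightarrow> bool" where
  "III_b s = (odd (length s) \<and> list_ex (\<lambda>a. s = hd s # rep a [s!1, s!2] @ hd s # s!1 # rep ((length s - 2*a - 3) div 2) [s!2, s!1]) [1..<length s])"
definition bad_b where "bad_b s = (I_c s \<or> II_b s \<or> III_b s \<or> IV_c s)"
definition chk where "chk s = (bad_b s \<or> list_ex (\<lambda>k. s!k = hd s \<and> (length s = 4 \<or> \<not> bad_b (mv k s))) [1..<length s])"

lemma II_b_eq: "II_b s = II_c s"
  unfolding II_b_def II_c_def list_all_iff by auto

lemma length_rep: "length (rep k w) = k * length w"
  by (induction k) (auto simp: rep_def)

lemma III_b_eq: "III_b s = III_c s"
proof
  assume "III_b s"
  then show "III_c s" unfolding III_b_def III_c_def list_ex_iff by auto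
next
  assume "III_c s"
  then obtain a b where a: "1 \<le> a" and e: "s = hd s # rep a [s!1, s!2] @ hd s # s!1 # rep b [s!2, s!1]"
    unfolding III_c_def by blast
  have l: "length s = 2 * a + 2 * b + 3"
    by (subst e) (simp add: length_rep)
  have "b = (length s - 2 * a - 3) div 2" using l by simp
  then have "s = hd s # rep a [s!1, s!2] @ hd s # s!1 # rep ((length s - 2 * a - 3) div 2) [s!2, s!1]"
    using e by simp
  moreover have "a \<in> set [1..<length s]" using a l by simp
  moreover have "odd (length s)" using l by simp
  ultimately show "III_b s" unfolding III_b_def list_ex_iff by blast
qed

lemma bad_b_eq: "bad_b s = bad_c s"
  unfolding bad_b_def bad_c_def II_b_eq III_b_eq ..

lemma comp: "list_all (\<lambda>m. list_all (\<lambda>l. 2 \<notin> set l \<or> chk (0#1#l)) (genr 1 m)) [2..<9]"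
  by code_simp

lemma genr_complete: "distinct_adj (x # l) \<Longrightarrow> set l \<subseteq> {0,1,2} \<Longrightarrow> l \<in> set (genr x (length l))"
proof (induction l arbitrary: x)
  case Nil then show ?case by simp
next
  case (Cons y l)
  have yx: "y \<noteq> x" using Cons.prems by simp
  have y2: "y \<in> {0,1,2}" using Cons.prems by simp
  have "l \<in> set (genr y (length l))" using Cons.IH[of y] Cons.prems by simp
  then show ?case using yx y2 by auto
qed

lemma comp_m: "2 \<le> m \<Longrightarrow> m \<le> 8 \<Longrightarrow> l \<in> set (genr 1 m) \<Longrightarrow> 2 \<in> set l \<Longrightarrow> chk (0#1#l)"
proof -
  assume m: "2 \<le> m" "m \<le> 8" and l: "l \<in> set (genr 1 m)" "2 \<in> set l"
  have "m \<in> set [2..<9]" unfolding set_upt using m by simp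
  moreover have "\<forall>m\<in>set [2..<9]. list_all (\<lambda>l. 2 \<notin> set l \<or> chk (0#1#l)) (genr 1 m)"
    using comp by (simp only: list_all_iff)
  ultimately have "list_all (\<lambda>l. 2 \<notin> set l \<or> chk (0#1#l)) (genr 1 m)" by blast
  then show ?thesis using l by (simp add: list_all_iff)
qed

lemma map_mv: "mv k (map f s) = map f (mv k s)"
  by (simp add: mv_def rev_map take_map drop_map)

lemma set_mv: "set (mv k s) \<subseteq> set s"
  unfolding mv_def using set_take_subset[of k s] set_drop_subset[of "Suc k" s] by auto

lemma K_small:
  assumes da: "distinct_adj s" and st: "set s = {0,1,2}" and l4: "4 \<le> length s" and l10: "length s \<le> 10"
    and nb: "\<not> bad_c s"
  shows "\<exists>k. 0 < k \<and> k < length s \<and> s ! k = s ! 0 \<and> (length s = 4 \<or> \<not> bad_c (mv k s))"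
proof -
  define A where "A = s ! 0"
  define B where "B = s ! 1"
  have AB: "A \<noteq> B" using distinct_adj_nth[OF da, of 0] l4 unfolding A_def B_def by simp
  have i0: "0 < length s" and i1: "1 < length s" using l4 by linarith+
  have "A \<in> set s" unfolding A_def using i0 by (rule nth_mem)
  moreover have "B \<in> set s" unfolding B_def using i1 by (rule nth_mem)
  ultimately have "A \<in> set s" "B \<in> set s" by simp_all
  then have A2: "A \<le> 2" and B2: "B \<le> 2" using st by auto
  define C where "C = 3 - A - B"
  have C1: "C \<noteq> A" using A2 B2 AB unfolding C_def by arith
  have C2: "C \<noteq> B" using A2 B2 AB unfolding C_def by arith
  have C3: "C \<le> 2" using A2 B2 AB unfolding C_def by arith
  define \<sigma> where "\<sigma> = mk A B C 0 1 2"
  have bij: "bij_betw \<sigma> {0,1,2} {0,1,2}" unfolding \<sigma>_def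
    by (rule bij_mk) (use AB C1 C2 C3 A2 B2 in simp_all)
  have ss: "set s \<subseteq> {0,1,2}" using st by simp
  define s' where "s' = map \<sigma> s"
  have inj: "inj_on \<sigma> (set s)" using bij st by (simp add: bij_betw_def)
  have das: "distinct_adj s'" unfolding s'_def by (rule distinct_adj_mapI[OF da inj])
  have surj: "\<sigma> ` {0,1,2} = {0,1,2}" using bij by (rule bij_betw_imp_surj_on)
  have sts: "set s' = {0,1,2}" unfolding s'_def set_map st by (rule surj)
  have s0a: "s' ! 0 = \<sigma> A" unfolding s'_def A_def using i0 by simp
  have s0b: "s' ! 1 = \<sigma> B" unfolding s'_def B_def using i1 by simp
  have s0: "s' ! 0 = 0" "s' ! 1 = 1" using s0a s0b AB unfolding \<sigma>_def by simp_all
  have ll: "length s' = length s" unfolding s'_def by simp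
  obtain x s1 where xs1: "s' = x # s1" using ll l4 by (cases s') auto
  obtain y l where yl: "s1 = y # l" using ll l4 xs1 by (cases s1) auto
  have sl: "s' = 0 # 1 # l" using xs1 yl s0 by simp
  have "(2::nat) \<in> set s'" unfolding sts by simp
  then have l2: "2 \<in> set l" using sl by simp
  have dal: "distinct_adj (1 # l)" using das sl by simp
  have "set l \<subseteq> set s'" using sl by auto
  then have sl2: "set l \<subseteq> {0,1,2}" unfolding sts .
  have "l \<in> set (genr 1 (length l))" by (rule genr_complete[OF dal sl2])
  moreover have "2 \<le> length l" "length l \<le> 8" using ll sl l4 l10 by simp_all
  ultimately have c: "chk s'" using comp_m l2 sl by blast
  have nb': "\<not> bad_c s'" unfolding s'_def using sym_bad_iff[OF bij ss] nb by simp
  then obtain k where k: "k \<in> set [1..<length s']" "s' ! k = hd s'" "length s' = 4 \<or> \<not> bad_b (mv k s')"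
    using c unfolding chk_def bad_b_eq list_ex_iff by blast
  have k1: "0 < k" "k < length s" using k(1) ll by auto
  have e1: "s' ! k = \<sigma> (s ! k)" unfolding s'_def using k1 by simp
  have e0: "s' ! 0 = \<sigma> (s ! 0)" unfolding s'_def using i0 by simp
  have "hd s' = s' ! 0" using sl by simp
  then have "\<sigma> (s ! k) = \<sigma> (s ! 0)" using k(2) e1 e0 by simp
  moreover have "s ! k \<in> set s" using k1(2) by (rule nth_mem)
  moreover have "s ! 0 \<in> set s" using i0 by (rule nth_mem)
  ultimately have sk: "s ! k = s ! 0" using bij_inj[OF bij ss] by blast
  have "length s = 4 \<or> \<not> bad_c (mv k s)"
  proof (cases "length s = 4")
    case False
    then have "\<not> bad_c (mv k s')" using k(3) ll bad_b_eq by simp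
    moreover have "mv k s' = map \<sigma> (mv k s)" unfolding s'_def by (rule map_mv)
    moreover have "set (mv k s) \<subseteq> {0,1,2}" using set_mv[of k s] ss by blast
    ultimately show ?thesis using sym_bad_iff[OF bij] by simp
  qed simp
  then show ?thesis using k1 sk by blast
qed

lemma last_alt_Suc: "last (alt x y (Suc k)) = (if even k then x else y)"
proof (induction k arbitrary: x y)
  case 0 then show ?case by simp
next
  case (Suc k)
  have "last (alt x y (Suc (Suc k))) = last (alt y x (Suc k))" by simp
  then show ?case using Suc[of y x] by simp
qed

lemma cons_alt_nth: "k < Suc m \<Longrightarrow> (x # alt y x m) ! k = (if even k then x else y)"
  using alt_nth[of k "Suc m" x y] by simp

lemma last_alt: "0 < n \<Longrightarrow> last (alt x y n) = (if even (n - 1) then x else y)"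
  using last_alt_Suc[of x y "n - 1"] by simp

lemma alt_eq_Nil[simp]: "(alt x y n = []) = (n = 0)"
  by (cases n) auto

lemma alt_Suc2: "alt x y (Suc (Suc n)) = x # y # alt x y n"
  by simp

lemma third: "a \<noteq> p \<Longrightarrow> a \<noteq> q \<Longrightarrow> p \<noteq> q \<Longrightarrow> a \<le> 2 \<Longrightarrow> p \<le> 2 \<Longrightarrow> q \<le> 2 \<Longrightarrow> z \<le> (2::nat) \<Longrightarrow> z = a \<or> z = p \<or> z = q"
  by arith

lemma III_nec:
  assumes da: "distinct_adj t" and st: "set t = {0,1,2}" and III: "III_c t"
  shows "last t = t!1 \<and> (\<forall>i j. 0 < i \<longrightarrow> i < j \<longrightarrow> j < length t \<longrightarrow> t!i = t!0 \<longrightarrow> t!j \<noteq> t!0)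
     \<and> (\<forall>i. 0 < i \<longrightarrow> i < length t \<longrightarrow> t!i = t!0 \<longrightarrow> Suc i < length t \<and> t!(Suc i) = t!1)"
proof -
  obtain a b where a: "1 \<le> a" and e0: "t = hd t # rep a [t!1, t!2] @ hd t # t!1 # rep b [t!2, t!1]"
    using III unfolding III_c_def by blast
  define A where "A = hd t"
  define B where "B = t ! 2"
  define C where "C = t ! 1"
  have e: "t = A # rep a [C,B] @ A # C # rep b [B,C]"
    unfolding A_def B_def C_def by (rule e0)
  obtain a' where a': "a = Suc a'" using a by (cases a) auto
  have e2: "t = A # C # B # (rep a' [C,B] @ A # C # rep b [B,C])"
    using e a' by (simp add: rep_Suc)
  have "distinct_adj (A # C # B # (rep a' [C,B] @ A # C # rep b [B,C]))" using da e2 by simp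
  then have AC: "A \<noteq> C" and CB: "C \<noteq> B" by auto
  have ss: "set t \<subseteq> {A, B, C}"
    using e set_rep[of a "[C,B]"] set_rep[of b "[B,C]"] by auto
  have AB: "A \<noteq> B"
  proof
    assume "A = B"
    then have "{0,1,2} \<subseteq> {A, C}" using ss st by auto
    then show False by auto
  qed
  have e3: "t = A # alt C B (2 * a) @ A # alt C B (Suc (2 * b))"
    using e by (simp add: alt_2)
  have t0: "t ! 0 = A" and t1: "t ! 1 = C" using e2 by simp_all
  have lt: "length t = 2 * a + 2 * b + 3" using e3 by simp
  have idx: "\<And>i. 0 < i \<Longrightarrow> i < length t \<Longrightarrow> (t ! i = A) = (i = Suc (2 * a))"
  proof -
    fix i assume i: "0 < i" "i < length t"
    obtain i' where i': "i = Suc i'" using i by (cases i) auto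
    have ti: "t ! i = (alt C B (2 * a) @ A # alt C B (Suc (2 * b))) ! i'"
      using e3 i' by simp
    show "(t ! i = A) = (i = Suc (2 * a))"
    proof (cases "i' < 2 * a")
      case True
      then have "t ! i = (if even i' then C else B)" using ti by (simp add: nth_append alt_nth)
      then show ?thesis using True AC AB i' by auto
    next
      case False
      show ?thesis
      proof (cases "i' = 2 * a")
        case True then show ?thesis using ti i' by (simp add: nth_append)
      next
        case False2: False
        have lt2: "i' - 2 * a - 1 < Suc (2 * b)" using i lt i' False False2 by simp
        have "t ! i = alt C B (Suc (2 * b)) ! (i' - 2 * a - 1)" using ti False False2
          by (simp add: nth_append del: alt.simps)
        then have "t ! i = (if even (i' - 2 * a - 1) then C else B)" using lt2
          by (simp add: alt_nth del: alt.simps)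
        then show ?thesis using AC AB i' False False2 by auto
      qed
    qed
  qed
  have p1: "last t = t!1"
  proof -
    have "last t = last (alt C B (Suc (2 * b)))" using e3 by (simp add: last_append)
    also have "\<dots> = C" by (simp add: last_alt)
    finally show ?thesis using t1 by simp
  qed
  have p2: "\<forall>i j. 0 < i \<longrightarrow> i < j \<longrightarrow> j < length t \<longrightarrow> t!i = t!0 \<longrightarrow> t!j \<noteq> t!0"
  proof (intro allI impI)
    fix i j assume ij: "0 < i" "i < j" "j < length t" "t ! i = t ! 0"
    then have "i = Suc (2 * a)" using idx t0 by simp
    moreover have "0 < j" "j < length t" using ij by simp_all
    ultimately show "t ! j \<noteq> t ! 0" using idx[of j] t0 ij(2) by simp
  qed
  have p3: "\<forall>i. 0 < i \<longrightarrow> i < length t \<longrightarrow> t!i = t!0 \<longrightarrow> Suc i < length t \<and> t!(Suc i) = t!1"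
  proof (intro allI impI)
    fix i assume i: "0 < i" "i < length t" "t ! i = t ! 0"
    then have ii: "i = Suc (2 * a)" using idx t0 by simp
    have "t ! Suc i = C" using e3 ii by (simp add: nth_append)
    then show "Suc i < length t \<and> t ! Suc i = t ! 1" using ii lt t1 by simp
  qed
  show ?thesis using p1 p2 p3 by blast
qed

lemma not_bad:
  assumes da: "distinct_adj t" and st: "set t = {0,1,2}" and l: "10 \<le> length t"
    and nI: "hd t \<in> set (tl t)"
    and nII: "\<exists>i<length t. even (length t - 1 - i) \<and> t!i \<noteq> last t"
    and nIII: "last t \<noteq> t!1 \<or> (\<exists>i j. 0 < i \<and> i < j \<and> j < length t \<and> t!i = t!0 \<and> t!j = t!0)
       \<or> (\<exists>i. 0 < i \<and> Suc i < length t \<and> t!i = t!0 \<and> t!(Suc i) \<noteq> t!1)"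
  shows "\<not> bad_c t"
proof -
  have "\<not> I_c t" using nI by (simp add: I_c_def)
  moreover have "\<not> II_c t" using nII unfolding II_c_def by blast
  moreover have "\<not> III_c t"
  proof
    assume "III_c t"
    from III_nec[OF da st this] show False using nIII by (metis Suc_lessD)
  qed
  moreover have "\<not> IV_c t" using l by (simp add: IV_c_def)
  ultimately show ?thesis by (simp add: bad_c_def)
qed

lemma moves_bad:
  assumes H: "\<forall>k. 0 < k \<and> k < length s \<and> s ! k = s ! 0 \<longrightarrow> bad_c (mv k s)"
    and s: "s = a # v @ a # w"
  shows "bad_c (rev v @ a # w)"
proof -
  have "bad_c (mv (Suc (length v)) s)" using H s by (simp add: nth_append)
  then show ?thesis using s by (simp add: mv_eq)
qed

lemma moves_props:
  assumes da: "distinct_adj (s :: nat list)" and s: "s = a # v @ a # w"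
  shows "distinct_adj (rev v @ a # w) \<and> set (rev v @ a # w) = set s \<and> length (rev v @ a # w) = length s - 1"
proof -
  have k: "0 < Suc (length v)" "Suc (length v) < length s" "s ! Suc (length v) = s ! 0"
    using s by (simp_all add: nth_append)
  show ?thesis using mv_props[OF da k] s by (simp add: mv_eq)
qed

locale kctx =
  fixes s :: "nat list" and a p q L :: nat and w :: "nat list"
  assumes da: "distinct_adj s" and st: "set s = {0,1,2}" and len: "11 \<le> length s"
    and H: "\<forall>k. 0 < k \<and> k < length s \<and> s ! k = s ! 0 \<longrightarrow> bad_c (mv k s)"
    and ap: "a \<noteq> p" and aq: "a \<noteq> q" and pq: "p \<noteq> q"
    and a2: "a \<le> 2" and p2: "p \<le> 2" and q2: "q \<le> 2"
    and sdef: "s = a # alt p q L @ a # w" and L1: "1 \<le> L"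
begin

lemma wset: "z \<in> set w \<Longrightarrow> z = a \<or> z = p \<or> z = q"
proof -
  assume "z \<in> set w"
  then have "z \<in> set s" using sdef by simp
  then have "z \<le> 2" using st by auto
  then show ?thesis using third[OF ap aq pq a2 p2 q2] by blast
qed

lemma mb: "s = a # v @ a # w' \<Longrightarrow> bad_c (rev v @ a # w')"
  by (rule moves_bad[OF H])

lemma mp: "s = a # v @ a # w' \<Longrightarrow> distinct_adj (rev v @ a # w') \<and> set (rev v @ a # w') = {0,1,2} \<and> length (rev v @ a # w') = length s - 1"
proof -
  assume s: "s = a # v @ a # w'"
  have A: "distinct_adj (rev v @ a # w') \<and> set (rev v @ a # w') = set s \<and> length (rev v @ a # w') = length s - 1"
    by (rule moves_props[OF da s])
  show ?thesis using A unfolding st by blast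
qed

definition nIII :: "nat list \<Rightarrow> bool" where
  "nIII t2 = (last t2 \<noteq> t2!1 \<or> (\<exists>i j. 0 < i \<and> i < j \<and> j < length t2 \<and> t2!i = t2!0 \<and> t2!j = t2!0)
       \<or> (\<exists>i. 0 < i \<and> Suc i < length t2 \<and> t2!i = t2!0 \<and> t2!(Suc i) \<noteq> t2!1))"

lemma nIII_a: "last t2 \<noteq> t2!1 \<Longrightarrow> nIII t2" by (simp add: nIII_def)
lemma nIII_b: "0 < i \<Longrightarrow> i < j \<Longrightarrow> j < length t2 \<Longrightarrow> t2!i = t2!0 \<Longrightarrow> t2!j = t2!0 \<Longrightarrow> nIII t2"
  unfolding nIII_def by blast
lemma nIII_c: "0 < i \<Longrightarrow> Suc i < length t2 \<Longrightarrow> t2!i = t2!0 \<Longrightarrow> t2!(Suc i) \<noteq> t2!1 \<Longrightarrow> nIII t2"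
  unfolding nIII_def by blast

lemma contra: "s = a # v @ a # w' \<Longrightarrow> t2 = rev v @ a # w' \<Longrightarrow>
   hd t2 \<in> set (tl t2) \<Longrightarrow> i < length t2 \<Longrightarrow> even (length t2 - 1 - i) \<Longrightarrow> t2!i \<noteq> last t2 \<Longrightarrow>
   nIII t2 \<Longrightarrow> False"
proof -
  assume s: "s = a # v @ a # w'" and t2: "t2 = rev v @ a # w'" and h: "hd t2 \<in> set (tl t2)"
    and i: "i < length t2" "even (length t2 - 1 - i)" "t2!i \<noteq> last t2"
    and j: "nIII t2"
  have props: "distinct_adj t2" "set t2 = {0,1,2}" "10 \<le> length t2" using mp[OF s] t2 len by auto
  have nII: "\<exists>i<length t2. even (length t2 - 1 - i) \<and> t2!i \<noteq> last t2" using i by blast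
  have n3: "last t2 \<noteq> t2!1 \<or> (\<exists>i j. 0 < i \<and> i < j \<and> j < length t2 \<and> t2!i = t2!0 \<and> t2!j = t2!0)
       \<or> (\<exists>i. 0 < i \<and> Suc i < length t2 \<and> t2!i = t2!0 \<and> t2!(Suc i) \<noteq> t2!1)"
    using j unfolding nIII_def .
  have "\<not> bad_c t2" by (rule not_bad[OF props h nII n3])
  then show False using mb[OF s] t2 by simp
qed

end

context kctx begin

lemma caseI_L1:
  assumes L: "L = 1" and It: "I_c (rev (alt p q L) @ a # w)"
  shows "bad_c s"
proof -
  have s1: "s = a # p # a # w" using sdef L by simp
  have pw: "p \<notin> set w" using It L by (simp add: I_c_def)
  have lw: "8 \<le> length w" using len s1 by simp
  have daw: "distinct_adj (a # w)" using da s1 by simp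
  obtain h w' where hw: "w = h # w'" using lw by (cases w) auto
  have ha: "h \<noteq> a" using daw hw by simp
  have hq: "h = q" using wset[of h] hw ha pw by auto
  have sw: "set w \<subseteq> {q, a}" using wset pw by blast
  define m where "m = length w"
  have wa: "w = alt q a m" unfolding m_def
    by (rule alt_unique) (use daw hw hq sw in \<open>auto simp: distinct_adj_Cons\<close>)
  show ?thesis
  proof (cases "even m")
    case True
    have s2: "s = a # p # alt a q (Suc m)" using s1 wa by simp
    have "II_c s"
      unfolding II_c_def
    proof (intro allI impI)
      fix i assume i: "i < length s" and ev: "even (length s - 1 - i)"
      have ls: "length s = m + 3" using s2 by simp
      have m8: "8 \<le> m" using lw m_def by simp
      have last: "last s = a" using s2 True m8 by (simp add: last_alt)
      show "s ! i = last s"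
      proof (cases i)
        case 0 then show ?thesis using s2 last by simp
      next
        case (Suc j)
        show ?thesis
        proof (cases j)
          case 0 then show ?thesis using ev ls Suc True by simp
        next
          case (Suc k)
          have km: "k < Suc m" using i ls \<open>i = Suc j\<close> Suc by simp
          moreover have "even k" using ev ls \<open>i = Suc j\<close> Suc True km by (simp add: even_diff_nat)
          ultimately show ?thesis using s2 last \<open>i = Suc j\<close> Suc by (simp add: cons_alt_nth)
        qed
      qed
    qed
    then show ?thesis by (simp add: bad_c_def)
  next
    case False
    define r where "r = m - 3"
    have r: "m = Suc (Suc (Suc r))" using lw unfolding m_def r_def by simp
    have s3: "s = a # [p, a, q] @ a # alt q a (Suc r)" using s1 wa r by simp
    define t2 where "t2 = rev [p, a, q] @ a # alt q a (Suc r)"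
    have t2e: "t2 = q # a # p # a # alt q a (Suc r)" unfolding t2_def by simp
    have oddr: "even r" using False r by simp
    have lastt: "last t2 = q" using t2e oddr by (simp add: last_alt)
    have False
    proof (rule contra[OF s3 t2_def, of 2])
      show "hd t2 \<in> set (tl t2)" using t2e by simp
      show "2 < length t2" "even (length t2 - 1 - 2)" "t2 ! 2 \<noteq> last t2"
        using t2e lastt oddr ap pq by simp_all
      show "nIII t2" using lastt t2e aq by (intro nIII_a) simp
    qed
    then show ?thesis by simp
  qed
qed

lemma caseI_L2:
  assumes L: "L = 2" and It: "I_c (rev (alt p q L) @ a # w)"
  shows "bad_c s"
proof -
  have s1: "s = a # p # q # a # w" using sdef L by (simp add: numeral_2_eq_2)
  have qw: "q \<notin> set w" using It L by (simp add: I_c_def numeral_2_eq_2)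
  have lw: "7 \<le> length w" using len s1 by simp
  have daw: "distinct_adj (a # w)" using da s1 by simp
  obtain h w' where hw: "w = h # w'" using lw by (cases w) auto
  have ha: "h \<noteq> a" using daw hw by simp
  have hp: "h = p" using wset[of h] hw ha qw by auto
  have sw: "set w \<subseteq> {p, a}" using wset qw by blast
  define m where "m = length w"
  have wa: "w = alt p a m" unfolding m_def
    by (rule alt_unique) (use daw hw hp sw in \<open>auto simp: distinct_adj_Cons\<close>)
  define r where "r = m - 3"
  have r: "m = Suc (Suc (Suc r))" using lw unfolding m_def r_def by simp
  have s3: "s = a # [p, q, a, p] @ a # alt p a (Suc r)" using s1 wa r by simp
  define t2 where "t2 = rev [p, q, a, p] @ a # alt p a (Suc r)"
  have t2e: "t2 = p # a # q # p # a # alt p a (Suc r)" unfolding t2_def by simp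
  have n3: "nIII t2" by (rule nIII_b[of 3 5]) (use t2e in simp_all)
  show ?thesis
  proof (cases "odd r")
    case True
    have r4: "4 \<le> r" using lw unfolding m_def r_def by simp
    have lastt: "last t2 = a" using t2e True r4 by (simp add: last_alt)
    have False
    proof (rule contra[OF s3 t2_def, of 2])
      show "hd t2 \<in> set (tl t2)" using t2e by simp
      show "2 < length t2" "even (length t2 - 1 - 2)" "t2 ! 2 \<noteq> last t2"
        using t2e lastt True aq by simp_all
    qed (rule n3)
    then show ?thesis by simp
  next
    case False
    have r4: "4 \<le> r" using lw unfolding m_def r_def by simp
    have lastt: "last t2 = p" using t2e False r4 by (simp add: last_alt)
    have False
    proof (rule contra[OF s3 t2_def, of 1])
      show "hd t2 \<in> set (tl t2)" using t2e by simp
      show "1 < length t2" "even (length t2 - 1 - 1)" "t2 ! 1 \<noteq> last t2"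
        using t2e lastt False ap by simp_all
    qed (rule n3)
    then show ?thesis by simp
  qed
qed

lemma caseI:
  assumes It: "I_c (rev (alt p q L) @ a # w)"
  shows "bad_c s"
proof -
  consider "L = 1" | "L = 2" | "3 \<le> L" using L1 by arith
  then show ?thesis
  proof cases
    case 1 then show ?thesis using caseI_L1 It by blast
  next
    case 2 then show ?thesis using caseI_L2 It by blast
  next
    case 3
    define L' where "L' = L - 3"
    have L': "L = Suc (Suc (Suc L'))" using 3 unfolding L'_def by simp
    have "\<exists>x y. rev (alt p q L) = alt x y L" using rev_alt[of p q L] by (cases "even L") auto
    then obtain x y where xy: "rev (alt p q L) = alt x y L" by blast
    have "rev (alt p q L) @ a # w = x # y # x # (alt y x L' @ a # w)" using xy L' by simp
    then have "\<not> I_c (rev (alt p q L) @ a # w)" by (simp add: I_c_def)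
    then show ?thesis using It by blast
  qed
qed

end

context kctx begin

lemma caseII_odd:
  assumes Lo: "odd L" and IIt: "II_c (rev (alt p q L) @ a # w)"
  shows "bad_c s"
proof -
  define t where "t = alt p q L @ a # w"
  have tt: "rev (alt p q L) @ a # w = t" using Lo rev_alt[of p q L] unfolding t_def by simp
  have II: "\<forall>k<length t. even (length t - 1 - k) \<longrightarrow> t ! k = last t"
    using IIt unfolding tt II_c_def .
  have st: "s = a # t" using sdef unfolding t_def by simp
  have lt: "length t = L + 1 + length w" unfolding t_def by simp
  have tL: "t ! L = a" unfolding t_def by (simp add: nth_append)
  have "II_c s" unfolding II_c_def
  proof (intro allI impI)
    fix i assume i: "i < length s" and ev: "even (length s - 1 - i)"
    have ls: "last s = last t" using st by (simp add: t_def)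
    show "s ! i = last s"
    proof (cases i)
      case 0
      have "even (length t - 1 - L)" using ev 0 st lt Lo by simp
      then have "t ! L = last t" using II lt by simp
      then show ?thesis using 0 st tL ls by simp
    next
      case (Suc j)
      have "j < length t" "even (length t - 1 - j)" using i ev st Suc by simp_all
      then have "t ! j = last t" using II by simp
      then show ?thesis using Suc st ls by simp
    qed
  qed
  then show ?thesis by (simp add: bad_c_def)
qed

lemma caseII_even:
  assumes Le: "even L" and IIt: "II_c (rev (alt p q L) @ a # w)"
  shows "bad_c s"
proof -
  define t where "t = alt q p L @ a # w"
  have tt: "rev (alt p q L) @ a # w = t" using Le rev_alt[of p q L] unfolding t_def by simp
  have II: "\<forall>k<length t. even (length t - 1 - k) \<longrightarrow> t ! k = last t"
    using IIt unfolding tt II_c_def .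
  have L2: "2 \<le> L" using L1 Le by presburger
  have lt: "length t = L + 1 + length w" unfolding t_def by simp
  have tk: "\<And>k. k < L \<Longrightarrow> t ! k = (if even k then q else p)" unfolding t_def by (simp add: nth_append alt_nth)
  have tL: "t ! L = a" unfolding t_def by (simp add: nth_append)
  have tw: "\<And>j. t ! (L + 1 + j) = w ! j" unfolding t_def by (simp add: nth_append)
  have wo: "odd (length w)"
  proof
    assume ew: "even (length w)"
    have "t ! L = last t" using II lt ew by simp
    moreover have "t ! (L - 2) = last t" using II lt ew L2 by simp
    moreover have "t ! (L - 2) = q" using tk[of "L - 2"] L2 Le by simp
    ultimately show False using tL aq by simp
  qed
  have lastp: "last t = p"
  proof -
    have "t ! (L - 1) = last t" using II lt wo L2 by simp
    moreover have "t ! (L - 1) = p" using tk[of "L - 1"] L2 Le by simp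
    ultimately show ?thesis by simp
  qed
  have weven: "\<And>j. j < length w \<Longrightarrow> even j \<Longrightarrow> w ! j = p"
  proof -
    fix j assume j: "j < length w" "even j"
    have "even (length t - 1 - (L + 1 + j))" using lt wo j by simp
    then have "t ! (L + 1 + j) = last t" using II lt j by simp
    then show "w ! j = p" using tw lastp by simp
  qed
  have daw: "distinct_adj (alt p q L @ a # w)" using da sdef by (simp add: distinct_adj_Cons)
  obtain \<alpha> where al: "L = 2 * \<alpha>" using Le by blast
  have al1: "1 \<le> \<alpha>" using al L1 by simp
  show ?thesis
  proof (cases "a \<in> set w")
    case False
    have sw: "set w \<subseteq> {p, q}" using wset False by blast
    have wne: "w \<noteq> []" using wo by auto
    have hw: "hd w = p" using weven[of 0] wne by (simp add: hd_conv_nth)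
    have dw: "distinct_adj w" using daw by (metis distinct_adj_appendD2 distinct_adj_ConsD)
    obtain \<beta> where be: "length w = Suc (2 * \<beta>)" using wo by (metis oddE Suc_eq_plus1)
    have wa: "w = alt p q (Suc (2 * \<beta>))" unfolding be[symmetric] by (rule alt_unique[OF dw sw wne hw])
    have s2: "s = a # alt p q (2 * \<alpha>) @ a # alt p q (Suc (2 * \<beta>))" using sdef al wa by simp
    obtain \<alpha>' where al': "\<alpha> = Suc \<alpha>'" using al1 by (cases \<alpha>) auto
    have h: "hd s = a" "s ! 1 = p" "s ! 2 = q" using s2 al' by simp_all
    have "s = hd s # rep \<alpha> [s!1, s!2] @ hd s # s!1 # rep \<beta> [s!2, s!1]"
      unfolding h using s2 by (simp add: alt_2)
    then have "III_c s" unfolding III_c_def using al1 by blast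
    then show ?thesis by (simp add: bad_c_def)
  next
    case True
    obtain w1 w2 where ws: "w = w1 @ a # w2" and aw1: "a \<notin> set w1"
      using split_list_first[OF True] by blast
    define j where "j = length w1"
    have wj: "w ! j = a" using ws j_def by simp
    have jw: "j < length w" using ws j_def by simp
    have jo: "odd j" using weven[OF jw] wj ap by auto
    have sw1: "set w1 \<subseteq> {p, q}" using wset aw1 ws by auto
    have w1ne: "w1 \<noteq> []" using jo j_def by auto
    have hw1: "hd w1 = p" using weven[of 0] w1ne ws jw by (simp add: hd_conv_nth nth_append)
    have dw1: "distinct_adj w1" using daw ws by (metis distinct_adj_appendD1 distinct_adj_appendD2 distinct_adj_ConsD)
    have w1a: "w1 = alt p q j" unfolding j_def by (rule alt_unique[OF dw1 sw1 w1ne hw1])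
    have lw2: "length w = j + 1 + length w2" using ws j_def by simp
    have w2o: "odd (length w2)" using lw2 wo jo by simp
    have w20: "w2 ! 0 = p"
    proof -
      have "w ! (j + 1) = p" using weven[of "j + 1"] lw2 w2o jo by (cases w2) auto
      then show ?thesis using ws j_def by (simp add: nth_append)
    qed
    have w2last: "last w2 = p"
    proof -
      have "last t = last w2" unfolding t_def using ws w2o by (cases w2) auto
      then show ?thesis using lastp by simp
    qed
    have s3: "s = a # (alt p q L @ a # w1) @ a # w2" using sdef ws by simp
    define t2 where "t2 = rev (alt p q L @ a # w1) @ a # w2"
    have t2e: "t2 = alt p q j @ a # alt q p L @ a # w2"
      unfolding t2_def using w1a jo Le by (simp add: rev_alt)
    have lt2: "length t2 = j + L + 2 + length w2" using t2e by simp
    have t20: "t2 ! 0 = p" using t2e jo by (cases j) auto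
    have lastt2: "last t2 = p" using t2e w2last w2o by (cases w2) auto
    have False
    proof (rule contra[OF s3 t2_def, of j])
      show "hd t2 \<in> set (tl t2)"
      proof -
        have A: "t2 ! (j + 2) = p" using t2e L2 by (simp add: nth_append alt_nth)
        obtain x xs where t2c: "t2 = x # xs" using lt2 by (cases t2) auto
        have x: "x = p" using t20 t2c by simp
        have B: "xs ! (j + 1) = p" using A t2c by simp
        have "j + 1 < length xs" using lt2 t2c L2 by simp
        then have "xs ! (j + 1) \<in> set xs" by (rule nth_mem)
        then show ?thesis using B x t2c by simp
      qed
      show "j < length t2" using lt2 by simp
      show "even (length t2 - 1 - j)" using lt2 Le w2o by simp
      show "t2 ! j \<noteq> last t2" using t2e lastt2 ap by (simp add: nth_append)
      show "nIII t2"
      proof (rule nIII_b[of "j + 2" "j + L + 2"])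
        show "0 < j + 2" by simp
        show "j + 2 < j + L + 2" using L2 by simp
        show "j + L + 2 < length t2" using lt2 w2o by (cases w2) auto
        show "t2 ! (j + 2) = t2 ! 0" using t2e L2 t20 by (simp add: nth_append alt_nth)
        show "t2 ! (j + L + 2) = t2 ! 0" using t2e w20 t20 by (simp add: nth_append)
      qed
    qed
    then show ?thesis by simp
  qed
qed

end

lemma alt_two[simp]: "alt x y 2 = [x, y]"
  by (simp add: numeral_2_eq_2)

lemma III_dist:
  assumes da: "distinct_adj t" and st: "set t = {0,1,2}" and III: "III_c t"
  shows "t!0 \<noteq> t!1 \<and> t!1 \<noteq> t!2 \<and> t!0 \<noteq> t!2 \<and> 3 \<le> length t"
proof -
  obtain a b where a: "1 \<le> a" and e0: "t = hd t # rep a [t!1, t!2] @ hd t # t!1 # rep b [t!2, t!1]"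
    using III unfolding III_c_def by blast
  define A where "A = hd t"
  define B where "B = t ! 2"
  define C where "C = t ! 1"
  have e: "t = A # rep a [C,B] @ A # C # rep b [B,C]"
    unfolding A_def B_def C_def by (rule e0)
  obtain a' where a': "a = Suc a'" using a by (cases a) auto
  have e2: "t = A # C # B # (rep a' [C,B] @ A # C # rep b [B,C])"
    using e a' by (simp add: rep_Suc)
  have "distinct_adj (A # C # B # (rep a' [C,B] @ A # C # rep b [B,C]))" using da e2 by simp
  then have AC: "A \<noteq> C" and CB: "C \<noteq> B" by auto
  have ss: "set t \<subseteq> {A, B, C}"
    using e set_rep[of a "[C,B]"] set_rep[of b "[B,C]"] by auto
  have AB: "A \<noteq> B"
  proof
    assume "A = B"
    then have "{0,1,2} \<subseteq> {A, C}" using ss st by auto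
    then show False by auto
  qed
  have "t!0 = A" "t!1 = C" "t!2 = B" "3 \<le> length t" using e2 by simp_all
  then show ?thesis using AC CB AB by simp
qed

context kctx begin

lemma caseIII:
  assumes IIIt: "III_c (rev (alt p q L) @ a # w)"
  shows "bad_c s"
proof -
  define t where "t = rev (alt p q L) @ a # w"
  have III: "III_c t" using IIIt unfolding t_def .
  have A: "distinct_adj (rev (alt p q L) @ a # w) \<and> set (rev (alt p q L) @ a # w) = {0,1,2} \<and> length (rev (alt p q L) @ a # w) = length s - 1"
    by (rule mp[OF sdef])
  have tp1: "distinct_adj t" using A unfolding t_def by (rule conjunct1)
  have tp2: "set t = {0,1,2}" using A unfolding t_def by (blast dest: conjunct2 conjunct1)
  have tp3: "length t = length s - 1" using A unfolding t_def by (blast dest: conjunct2)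
  note tp = tp1 tp2 tp3
  have dist: "t!0 \<noteq> t!1 \<and> t!1 \<noteq> t!2 \<and> t!0 \<noteq> t!2 \<and> 3 \<le> length t"
    by (rule III_dist[OF tp(1,2) III])
  obtain \<alpha> \<beta> where al: "1 \<le> \<alpha>" and e0: "t = hd t # rep \<alpha> [t!1, t!2] @ hd t # t!1 # rep \<beta> [t!2, t!1]"
    using III unfolding III_c_def by blast
  consider "L = 1" | "L = 2" | "3 \<le> L" using L1 by arith
  then show ?thesis
  proof cases
    case 3
    define L' where "L' = L - 3"
    have L': "L = Suc (Suc (Suc L'))" using 3 unfolding L'_def by simp
    have "\<exists>x y. rev (alt p q L) = alt x y L" using rev_alt[of p q L] by (cases "even L") auto
    then obtain x y where xy: "rev (alt p q L) = alt x y L" by blast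
    have "t = x # y # x # (alt y x L' @ a # w)" using xy L' unfolding t_def by simp
    then have "t!0 = t!2" by simp
    then show ?thesis using dist by simp
  next
    case 1
    have t1: "t = p # a # w" unfolding t_def using 1 by simp
    have "length t \<ge> 10" using tp(3) len by simp
    then obtain B w' where w: "w = B # w'" using t1 by (cases w) auto
    have Bp: "B \<noteq> p" "B \<noteq> a" using dist unfolding t1 w by simp_all
    have "B \<in> set t" using t1 w by simp
    then have B2: "B \<le> 2" using tp(2) by auto
    have Bq: "B = q" using third[OF ap aq pq a2 p2 q2 B2] Bp by blast
    have h: "hd t = p" "t!1 = a" "t!2 = q" using t1 w Bq by simp_all
    have e: "t = p # alt a q (2 * \<alpha>) @ p # a # alt q a (2 * \<beta>)"
      using e0 unfolding h by (simp add: alt_2)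
    obtain \<alpha>' where al': "\<alpha> = Suc \<alpha>'" using al by (cases \<alpha>) auto
    have s3: "s = a # (p # alt a q (2 * \<alpha>) @ [p]) @ a # alt q a (2 * \<beta>)"
      using sdef 1 e t1 by simp
    define t2 where "t2 = rev (p # alt a q (2 * \<alpha>) @ [p]) @ a # alt q a (2 * \<beta>)"
    have t2e: "t2 = p # alt q a (2 * \<alpha>) @ p # a # alt q a (2 * \<beta>)"
      unfolding t2_def by (simp add: rev_alt)
    have lt2: "length t2 = 2 * \<alpha> + 2 * \<beta> + 3" using t2e by simp
    have lastt2: "last t2 = a"
    proof (cases \<beta>)
      case 0 then show ?thesis using t2e by simp
    next
      case (Suc b) then show ?thesis using t2e by (simp add: last_alt)
    qed
    have False
    proof (rule contra[OF s3 t2_def, of 0])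
      show "hd t2 \<in> set (tl t2)" using t2e by simp
      show "0 < length t2" using lt2 by simp
      show "even (length t2 - 1 - 0)" using lt2 by simp
      show "t2 ! 0 \<noteq> last t2" using t2e lastt2 ap by simp
      show "nIII t2"
      proof (rule nIII_c[of "Suc (2 * \<alpha>)"])
        show "0 < Suc (2 * \<alpha>)" by simp
        show "Suc (Suc (2 * \<alpha>)) < length t2" using lt2 by simp
        show "t2 ! Suc (2 * \<alpha>) = t2 ! 0" using t2e by (simp add: nth_append)
        show "t2 ! Suc (Suc (2 * \<alpha>)) \<noteq> t2 ! 1" using t2e al' aq by (simp add: nth_append)
      qed
    qed
    then show ?thesis by simp
  next
    case 2
    have t1: "t = q # p # a # w" unfolding t_def using 2 by (simp add: numeral_2_eq_2)
    have h: "hd t = q" "t!1 = p" "t!2 = a" using t1 by simp_all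
    have e: "t = q # alt p a (2 * \<alpha>) @ q # alt p a (Suc (2 * \<beta>))"
      using e0 unfolding h by (simp add: alt_2)
    show ?thesis
    proof (cases "2 \<le> \<alpha>")
      case True
      define g where "g = \<alpha> - 2"
      have g: "2 * \<alpha> = Suc (Suc (Suc (Suc (2 * g))))" using True unfolding g_def by simp
      have w: "w = p # a # alt p a (2 * g) @ q # alt p a (Suc (2 * \<beta>))"
        using e t1 g by simp
      have s3: "s = a # [p, q, a, p] @ a # (alt p a (2 * g) @ q # alt p a (Suc (2 * \<beta>)))"
        using sdef 2 w by (simp add: numeral_2_eq_2)
      define t2 where "t2 = rev [p, q, a, p] @ a # (alt p a (2 * g) @ q # alt p a (Suc (2 * \<beta>)))"
      have t2e: "t2 = p # a # q # p # a # alt p a (2 * g) @ q # alt p a (Suc (2 * \<beta>))"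
        unfolding t2_def by simp
      have lt2: "length t2 = 2 * g + 2 * \<beta> + 7" using t2e by simp
      have lastt2: "last t2 = p" using t2e by (simp add: last_alt)
      have False
      proof (rule contra[OF s3 t2_def, of 2])
        show "hd t2 \<in> set (tl t2)" using t2e by simp
        show "2 < length t2" using lt2 by simp
        show "even (length t2 - 1 - 2)" using lt2 by simp
        show "t2 ! 2 \<noteq> last t2" using t2e lastt2 pq by simp
        show "nIII t2"
        proof (rule nIII_b[of 3 "2 * g + 6"])
          show "0 < (3::nat)" by simp
          show "3 < 2 * g + 6" by simp
          show "2 * g + 6 < length t2" using lt2 by simp
          show "t2 ! 3 = t2 ! 0" using t2e by simp
          show "t2 ! (2 * g + 6) = t2 ! 0" using t2e by (simp add: nth_append)
        qed
      qed
      then show ?thesis by simp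
    next
      case False
      have a1: "\<alpha> = 1" using False al by simp
      have "length t = 2 * \<beta> + 5" using e a1 by simp
      then have lb: "3 \<le> \<beta>" using tp(3) len by simp
      define g where "g = \<beta> - 1"
      have g: "Suc (2 * \<beta>) = Suc (Suc (Suc (2 * g)))" using lb unfolding g_def by simp
      have w: "w = q # p # a # alt p a (Suc (2 * g))"
        using e t1 g a1 by simp
      have s3: "s = a # [p, q, a, q, p] @ a # alt p a (Suc (2 * g))"
        using sdef 2 w by (simp add: numeral_2_eq_2)
      define t2 where "t2 = rev [p, q, a, q, p] @ a # alt p a (Suc (2 * g))"
      have t2e: "t2 = p # q # a # q # p # a # alt p a (Suc (2 * g))"
        unfolding t2_def by simp
      have lt2: "length t2 = 2 * g + 7" using t2e by simp
      have lastt2: "last t2 = p" using t2e by (simp add: last_alt)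
      have False
      proof (rule contra[OF s3 t2_def, of 2])
        show "hd t2 \<in> set (tl t2)" using t2e by simp
        show "2 < length t2" using lt2 by simp
        show "even (length t2 - 1 - 2)" using lt2 by simp
        show "t2 ! 2 \<noteq> last t2" using t2e lastt2 ap by simp
        show "nIII t2"
        proof (rule nIII_b[of 4 6])
          show "0 < (4::nat)" by simp
          show "4 < (6::nat)" by simp
          show "6 < length t2" using lt2 by simp
          show "t2 ! 4 = t2 ! 0" using t2e by simp
          show "t2 ! 6 = t2 ! 0" using t2e by simp
        qed
      qed
      then show ?thesis by simp
    qed
  qed
qed

end

lemma K_big:
  assumes da: "distinct_adj s" and st: "set s = {0,1,2}" and len: "11 \<le> length s"
    and H: "\<forall>k. 0 < k \<and> k < length s \<and> s ! k = s ! 0 \<longrightarrow> bad_c (mv k s)"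
  shows "bad_c s"
proof -
  obtain a s1 where s1: "s = a # s1" using len by (cases s) auto
  show ?thesis
  proof (cases "a \<in> set s1")
    case False
    then have "I_c s" using s1 len by (simp add: I_c_def)
    then show ?thesis by (simp add: bad_c_def)
  next
    case True
    obtain u w where uw: "s1 = u @ a # w" and au: "a \<notin> set u"
      using split_list_first[OF True] by blast
    have s2: "s = a # u @ a # w" using s1 uw by simp
    have une: "u \<noteq> []"
    proof
      assume "u = []"
      then have "distinct_adj (a # a # w)" using da s2 by simp
      then show False by simp
    qed
    define p where "p = hd u"
    have pu: "p \<in> set u" using une unfolding p_def by simp
    have ap: "a \<noteq> p" using pu au by blast
    have "a \<in> set s" "p \<in> set s" using s2 pu by auto
    then have a2: "a \<le> 2" and p2: "p \<le> 2" using st by auto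
    define q where "q = 3 - a - p"
    have aq: "a \<noteq> q" using a2 p2 ap unfolding q_def by arith
    have pq: "p \<noteq> q" using a2 p2 ap unfolding q_def by arith
    have q2: "q \<le> 2" using a2 p2 ap unfolding q_def by arith
    have su: "set u \<subseteq> {p, q}"
    proof
      fix z assume z: "z \<in> set u"
      then have "z \<in> set s" using s2 by simp
      then have "z \<le> 2" using st by auto
      moreover have "z \<noteq> a" using z au by blast
      ultimately show "z \<in> {p, q}" using third[OF ap aq pq a2 p2 q2, of z] by blast
    qed
    have "distinct_adj (u @ a # w)" using da s2 distinct_adj_ConsD by simp
    then have du: "distinct_adj u" by (rule distinct_adj_appendD1)
    define L where "L = length u"
    have ua: "u = alt p q L" unfolding L_def by (rule alt_unique[OF du su une]) (simp add: p_def)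
    have L1: "1 \<le> L" using une unfolding L_def by (cases u) auto
    have sdef: "s = a # alt p q L @ a # w" using s2 ua by simp
    interpret kctx s a p q L w
      by unfold_locales (rule da st len H ap aq pq a2 p2 q2 sdef L1)+
    have bt: "bad_c (rev (alt p q L) @ a # w)" by (rule mb[OF sdef])
    have "length (rev (alt p q L) @ a # w) = length s - 1" using sdef by simp
    then have "10 \<le> length (rev (alt p q L) @ a # w)" using len by simp
    then have nIV: "\<not> IV_c (rev (alt p q L) @ a # w)" unfolding IV_c_def by simp
    consider "I_c (rev (alt p q L) @ a # w)" | "II_c (rev (alt p q L) @ a # w)" | "III_c (rev (alt p q L) @ a # w)"
      using bt nIV unfolding bad_c_def by blast
    then show ?thesis
    proof cases
      case 1 then show ?thesis by (rule caseI)
    next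
      case 2
      show ?thesis
      proof (cases "even L")
        case True then show ?thesis using caseII_even 2 by blast
      next
        case False then show ?thesis using caseII_odd 2 by blast
      qed
    next
      case 3 then show ?thesis by (rule caseIII)
    qed
  qed
qed

lemma K_all:
  assumes da: "distinct_adj s" and st: "set s = {0,1,2}" and l4: "4 \<le> length s"
    and nb: "\<not> bad_c s"
  shows "\<exists>k. 0 < k \<and> k < length s \<and> s ! k = s ! 0 \<and> (length s = 4 \<or> \<not> bad_c (mv k s))"
proof (cases "length s \<le> 10")
  case True then show ?thesis using K_small[OF da st l4 True nb] by blast
next
  case False
  show ?thesis
  proof (rule ccontr)
    assume "\<not> ?thesis"
    then have H: "\<forall>k. 0 < k \<and> k < length s \<and> s ! k = s ! 0 \<longrightarrow> bad_c (mv k s)" using False by auto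
    have "bad_c s" by (rule K_big[OF da st _ H]) (use False in simp)
    then show False using nb by simp
  qed
qed

lemma reach_good:
  "\<forall>s. distinct_adj s \<longrightarrow> set s = {0,1,2} \<longrightarrow> length s = n \<longrightarrow> (n = 3 \<or> \<not> bad_c s) \<longrightarrow>
     (\<exists>t. reach s (n - 3) t \<and> length t = 3)"
proof (induction n)
  case 0 then show ?case using len3 by fastforce
next
  case (Suc n)
  show ?case
  proof (intro allI impI)
    fix s assume da: "distinct_adj s" and st: "set s = {0,1,2}" and ls: "length s = Suc n"
      and c: "Suc n = 3 \<or> \<not> bad_c s"
    show "\<exists>t. reach s (Suc n - 3) t \<and> length t = 3"
    proof (cases "Suc n = 3")
      case True then show ?thesis using ls by (intro exI[of _ s]) simp
    next
      case False
      have l3: "3 \<le> length s" using len3[OF st] .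
      then have l4: "4 \<le> length s" using False ls by simp
      have nb: "\<not> bad_c s" using c False by simp
      obtain k where k: "0 < k" "k < length s" "s ! k = s ! 0" "length s = 4 \<or> \<not> bad_c (mv k s)"
        using K_all[OF da st l4 nb] by blast
      have mp: "distinct_adj (mv k s)" "set (mv k s) = set s" "length (mv k s) = length s - 1"
        using mv_props[OF da k(1-3)] by simp_all
      have c2: "n = 3 \<or> \<not> bad_c (mv k s)" using k(4) ls by auto
      have sm: "set (mv k s) = {0,1,2}" using mp(2) st by simp
      have lm: "length (mv k s) = n" using mp(3) ls by simp
      have "\<exists>t. reach (mv k s) (n - 3) t \<and> length t = 3"
        using Suc.IH[rule_format, OF mp(1) sm lm c2] .
      then obtain t where t: "reach (mv k s) (n - 3) t" "length t = 3" by blast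
      have fl: "flip k s = mv k s" by (rule flip_mv[OF da k(1-3)])
      have "Suc n - 3 = Suc (n - 3)" using l4 ls by simp
      moreover have "reach s (Suc (n - 3)) t"
        using t(1) fl k(1,2) by (auto intro!: exI[of _ k])
      ultimately show ?thesis using t(2) by auto
    qed
  qed
qed

theorem lemma3p5:
  fixes s :: "nat list" and n :: nat
  assumes "normalized s" and "fully_kary 3 s" and "length s = n" and "good s"
  shows "grouping_distance 3 s = n - 3"
proof -
  have da: "distinct_adj s" using assms(1) by (simp add: normalized_iff)
  have e3: "{0..<3::nat} = {0,1,2}" by auto
  have st: "set s = {0,1,2}" using assms(2) unfolding fully_kary_def e3 .
  have nb: "\<not> bad_c s" using assms(4) bad_c_sound[OF da st] by (auto simp: good_def)
  have "\<exists>t. reach s (n - 3) t \<and> length t = 3"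
    using reach_good[of n, rule_format, OF da st assms(3)] nb by blast
  then obtain t where t: "reach s (n - 3) t" "length t = 3" by blast
  show ?thesis unfolding grouping_distance_def
  proof (rule Least_equality)
    show "\<exists>t. reach s (n - 3) t \<and> length t = 3" using t by blast
  next
    fix m assume "\<exists>t. reach s m t \<and> length t = 3"
    then obtain t' where "reach s m t'" "length t' = 3" by blast
    then have "length s \<le> length t' + m" using reach_len[OF da] by blast
    then have "length s \<le> 3 + m" using \<open>length t' = 3\<close> by simp
    then show "n - 3 \<le> m" using assms(3) by simp
  qed
qed

end
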